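(* For every integer $n\ge3$, $$\int_{1+\frac1n}^{1+\frac{(\log n)^2}{n}}F_n(w)\,dw\le 2n\log\log n.$$
   Context: For $w>0$ and integer $n\ge1$ let $a_n(w)=\sum_{j=0}^n w^j$, $b_n(w)=\sum_{j=1}^n jw^j$, $c_n(w)=\sum_{j=0}^n j^2w^j$, and $$F_n(w)=\frac{1}{2\sqrt{w}}\sqrt{\frac{c_n(w)}{a_n(w)}}\sqrt{\frac{a_n(w)c_n(w)-b_n(w)^2}{w\,a_n(w)^2}}.$$ $\log$ is the natural logarithm. *)

theory Defs
  imports "HOL-Analysis.Analysis"
begin

definition a_n :: "nat \<Rightarrow> real \<Rightarrow> real" where
  "a_n n w = (\<Sum>j=0..n. w ^ j)"

definition b_n :: "nat \<Rightarrow> real \<Rightarrow> real" where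
  "b_n n w = (\<Sum>j=1..n. real j * w ^ j)"

definition c_n :: "nat \<Rightarrow> real \<Rightarrow> real" where
  "c_n n w = (\<Sum>j=0..n. (real j)^2 * w ^ j)"

definition F_n :: "nat \<Rightarrow> real \<Rightarrow> real" where
  "F_n n w = 1 / (2 * sqrt w) * sqrt (c_n n w / a_n n w)
     * sqrt ((a_n n w * c_n n w - (b_n n w)^2) / (w * (a_n n w)^2))"

end

theory Submission imports Defs begin

lemma idU: "(1 - q) * (\<Sum>k=0..n. real k * q^k) = (\<Sum>k=0..n. q^k) - 1 - real n * q^(Suc n)"
  for q :: real
  by (induction n) (auto simp: algebra_simps)

lemma idT: "(1 - q) * (\<Sum>k=0..n. (real k)^2 * q^k) = 2 * (\<Sum>k=0..n. real k * q^k) - ((\<Sum>k=0..n. q^k) - 1) - (real n)^2 * q^(Suc n)"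
  for q :: real
  by (induction n) (auto simp: algebra_simps power2_eq_square)

lemma S_ge1: "0 \<le> q \<Longrightarrow> (1::real) \<le> (\<Sum>k=0..n. q^k)"
  by (induction n) (simp_all add: add_increasing2)

lemma keyq:
  fixes q :: real assumes "0 \<le> q" "q \<le> 1"
  shows "(1 - q)^2 * (\<Sum>k=0..n. (real k)^2 * q^k) \<le> 2 * (\<Sum>k=0..n. q^k)"
proof -
  let ?S = "\<Sum>k=0..n. q^k" and ?U = "\<Sum>k=0..n. real k * q^k" and ?T = "\<Sum>k=0..n. (real k)^2 * q^k"
  have S1: "1 \<le> ?S" using S_ge1 assms by auto
  have p: "0 \<le> q^(Suc n)" using assms by simp
  have U0: "0 \<le> ?U" using assms by (intro sum_nonneg) auto
  have h1: "(1 - q) * ?T \<le> 2 * ?U" using idT[of q n] S1 p by (smt (verit) mult_nonneg_nonneg zero_le_power2)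
  have h2: "(1 - q) * ?U \<le> ?S" using idU[of q n] p by (smt (verit) mult_nonneg_nonneg of_nat_0_le_iff)
  have "(1 - q)^2 * ?T = (1 - q) * ((1 - q) * ?T)" by (simp add: power2_eq_square)
  also have "\<dots> \<le> (1 - q) * (2 * ?U)" using h1 assms by (intro mult_left_mono) auto
  also have "\<dots> \<le> 2 * ?S" using h2 by simp
  finally show ?thesis .
qed


lemma a_ge1: "0 \<le> w \<Longrightarrow> 1 \<le> a_n n w"
  unfolding a_n_def by (rule S_ge1)

lemma b_alt: "b_n n w = (\<Sum>j=0..n. real j * w^j)"
  unfolding b_n_def by (simp add: sum.atLeast_Suc_atMost)

lemma reflT:
  fixes w :: real assumes "w > 0"
  shows "(\<Sum>j=0..n. (real n - real j)^2 * w^j) = w^n * (\<Sum>k=0..n. (real k)^2 * (1/w)^k)"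
proof -
  have "(\<Sum>j=0..n. (real n - real j)^2 * w^j) = (\<Sum>j=0..n. (real n - real (n + 0 - j))^2 * w^(n + 0 - j))"
    by (rule sum.atLeastAtMost_rev)
  also have "\<dots> = (\<Sum>k=0..n. w^n * ((real k)^2 * (1/w)^k))"
  proof (rule sum.cong)
    fix k assume "k \<in> {0..n}" hence k: "k \<le> n" by simp
    have "w^(n-k) = w^n * (1/w)^k" using assms k by (simp add: power_diff power_one_over)
    then show "(real n - real (n + 0 - k))^2 * w^(n + 0 - k) = w^n * ((real k)^2 * (1/w)^k)"
      using k by (simp add: of_nat_diff)
  qed simp
  finally show ?thesis by (simp add: sum_distrib_left)
qed

lemma reflS:
  fixes w :: real assumes "w > 0"
  shows "a_n n w = w^n * (\<Sum>k=0..n. (1/w)^k)"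
proof -
  have "a_n n w = (\<Sum>j=0..n. w^(n + 0 - j))" unfolding a_n_def by (rule sum.atLeastAtMost_rev)
  also have "\<dots> = (\<Sum>k=0..n. w^n * (1/w)^k)"
    by (rule sum.cong) (use assms in \<open>auto simp: power_diff power_one_over\<close>)
  finally show ?thesis by (simp add: sum_distrib_left)
qed

lemma cprime:
  "(\<Sum>j=0..n. (real n - real j)^2 * w^j) = (real n)^2 * a_n n w - 2 * real n * b_n n w + c_n n w"
  unfolding a_n_def b_alt c_n_def
  by (simp add: sum_distrib_left sum_subtractf[symmetric] sum.distrib[symmetric] power2_eq_square algebra_simps)

lemma var_bound:
  fixes w :: real assumes "w > 1"
  shows "(w - 1)^2 * (a_n n w * c_n n w - (b_n n w)^2) \<le> 2 * w^2 * (a_n n w)^2"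
proof -
  define q where "q = 1 / w"
  have q0: "0 \<le> q" "q \<le> 1" using assms by (auto simp: q_def)
  define T where "T = (\<Sum>k=0..n. (real k)^2 * q^k)"
  define S where "S = (\<Sum>k=0..n. q^k)"
  define a where "a = a_n n w"
  define c' where "c' = (\<Sum>j=0..n. (real n - real j)^2 * w^j)"
  have aS: "a = w^n * S" using reflS[of w n] assms by (simp add: a_def S_def q_def)
  have cT: "c' = w^n * T" using reflT[of w n] assms by (simp add: c'_def T_def q_def)
  have key: "(1 - q)^2 * T \<le> 2 * S" unfolding T_def S_def by (rule keyq[OF q0])
  have wq: "(w - 1) = w * (1 - q)" using assms by (simp add: q_def field_simps)
  have a1: "1 \<le> a" using a_ge1[of w n] assms by (simp add: a_def)
  have "a_n n w * c_n n w - (b_n n w)^2 = a * c' - (real n * a - b_n n w)^2"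
    unfolding c'_def cprime a_def by (simp add: power2_eq_square algebra_simps)
  also have "\<dots> \<le> a * c'" by simp
  finally have v: "a_n n w * c_n n w - (b_n n w)^2 \<le> a * c'" .
  have "(w - 1)^2 * (a_n n w * c_n n w - (b_n n w)^2) \<le> (w - 1)^2 * (a * c')"
    using v by (intro mult_left_mono) auto
  also have "\<dots> = w^2 * a * w^n * ((1 - q)^2 * T)" unfolding wq cT by (simp add: power2_eq_square algebra_simps)
  also have "\<dots> \<le> w^2 * a * w^n * (2 * S)"
    using key a1 assms by (intro mult_left_mono) auto
  also have "\<dots> = 2 * w^2 * a^2" unfolding aS by (simp add: power2_eq_square algebra_simps)
  finally show ?thesis by (simp add: a_def)
qed

lemma c_le: "0 \<le> w \<Longrightarrow> c_n n w \<le> (real n)^2 * a_n n w"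
  unfolding c_n_def a_n_def sum_distrib_left
  by (intro sum_mono mult_right_mono) auto

lemma F_bound:
  fixes w :: real assumes "w > 1"
  shows "F_n n w \<le> real n / (w - 1)"
proof -
  define a where "a = a_n n w"
  define X where "X = a_n n w * c_n n w - (b_n n w)^2"
  have a1: "1 \<le> a" using a_ge1[of w n] assms by (simp add: a_def)
  have c0: "0 \<le> c_n n w" unfolding c_n_def using assms by (intro sum_nonneg) auto
  have h1: "sqrt (c_n n w / a) \<le> real n"
  proof -
    have "c_n n w / a \<le> (real n)^2" using c_le[of w n] a1 assms by (simp add: a_def divide_le_eq)
    hence "sqrt (c_n n w / a) \<le> sqrt ((real n)^2)" by (rule real_sqrt_le_mono)
    thus ?thesis by simp
  qed
  have vb: "(w - 1)^2 * X \<le> 2 * w^2 * a^2" using var_bound[OF assms, of n] by (simp add: X_def a_def)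
  have d1: "0 < w * a^2" using a1 assms by simp
  have d2: "0 < (w - 1)^2" using assms by simp
  have "X \<le> 2 * w^2 * a^2 / (w - 1)^2" using vb d2 by (simp add: pos_le_divide_eq mult.commute)
  also have "\<dots> = 2 * w / (w - 1)^2 * (w * a^2)" by (simp add: power2_eq_square)
  finally have "X / (w * a^2) \<le> 2 * w / (w - 1)^2" using d1 by (simp add: pos_divide_le_eq)
  hence "sqrt (X / (w * a^2)) \<le> sqrt (2 * w / (w - 1)^2)" by (rule real_sqrt_le_mono)
  also have "\<dots> = sqrt 2 * sqrt w / (w - 1)" using assms by (simp add: real_sqrt_mult real_sqrt_divide)
  finally have h2: "sqrt (X / (w * a^2)) \<le> sqrt 2 * sqrt w / (w - 1)" .
  have "F_n n w = 1 / (2 * sqrt w) * sqrt (c_n n w / a) * sqrt (X / (w * a^2))"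
    by (simp add: F_n_def a_def X_def)
  also have "\<dots> \<le> 1 / (2 * sqrt w) * real n * (sqrt 2 * sqrt w / (w - 1))"
  proof -
    have p0: "0 \<le> 1 / (2 * sqrt w) * sqrt (c_n n w / a)" using assms c0 a1 by (intro mult_nonneg_nonneg) auto
    have B0: "0 \<le> sqrt 2 * sqrt w / (w - 1)" using assms by simp
    have "1 / (2 * sqrt w) * sqrt (c_n n w / a) * sqrt (X / (w * a^2))
        \<le> 1 / (2 * sqrt w) * sqrt (c_n n w / a) * (sqrt 2 * sqrt w / (w - 1))"
      using h2 p0 by (rule mult_left_mono)
    also have "\<dots> \<le> 1 / (2 * sqrt w) * real n * (sqrt 2 * sqrt w / (w - 1))"
      using h1 B0 assms by (intro mult_right_mono mult_left_mono) auto
    finally show ?thesis .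
  qed
  also have "\<dots> = real n * sqrt 2 / (2 * (w - 1))" using assms by (simp add: field_simps)
  also have "\<dots> \<le> real n / (w - 1)"
  proof -
    have "sqrt 2 \<le> sqrt 4" by (rule real_sqrt_le_mono) simp
    hence "sqrt 2 \<le> 2" by (simp add: real_sqrt_four)
    hence "real n * sqrt 2 \<le> real n * 2" by (intro mult_left_mono) auto
    hence "real n * sqrt 2 / 2 \<le> real n" by simp
    hence "real n * sqrt 2 / 2 / (w - 1) \<le> real n / (w - 1)" using assms by (intro divide_right_mono) auto
    thus ?thesis by simp
  qed
  finally show ?thesis .
qed


lemma F_cont: "continuous_on {lo..hi} (F_n n)" if "0 < lo" for lo hi :: real
proof -
  have ca: "continuous_on {lo..hi} (a_n n)" unfolding a_n_def by (intro continuous_intros)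
  have cb: "continuous_on {lo..hi} (b_n n)" unfolding b_n_def by (intro continuous_intros)
  have cc: "continuous_on {lo..hi} (c_n n)" unfolding c_n_def by (intro continuous_intros)
  have apos: "\<And>w. w \<in> {lo..hi} \<Longrightarrow> a_n n w \<noteq> 0" using a_ge1 that
    by (metis atLeastAtMost_iff less_le_trans not_one_le_zero order.strict_implies_order)
  show ?thesis unfolding F_n_def[abs_def]
    using that apos
    by (intro continuous_intros ca cb cc) auto
qed

theorem lemma3p5:
  fixes n :: nat
  assumes "n \<ge> 3"
  shows "integral {1 + 1 / real n .. 1 + (ln (real n))^2 / real n} (F_n n)
           \<le> 2 * real n * ln (ln (real n))"
proof -
  define lo where "lo = 1 + 1 / real n"
  define hi where "hi = 1 + (ln (real n))^2 / real n"
  have n3: "3 \<le> real n" using assms by simp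
  have ln1: "1 \<le> ln (real n)"
  proof -
    have "exp 1 \<le> real n" using exp_le n3 by linarith
    hence "ln (exp 1) \<le> ln (real n)" using n3 by (subst ln_le_cancel_iff) auto
    thus ?thesis by simp
  qed
  have lh: "lo \<le> hi" unfolding lo_def hi_def using ln1 n3
    by (simp add: divide_right_mono one_le_power)
  have lo1: "1 < lo" unfolding lo_def using n3 by simp
  have intF: "F_n n integrable_on {lo..hi}"
    by (rule integrable_continuous_interval, rule F_cont) (use lo1 in simp)
  define G where "G = (\<lambda>w. real n * ln (w - 1))"
  have der: "\<And>x. x \<in> {lo..hi} \<Longrightarrow> (G has_vector_derivative (real n / (x - 1))) (at x within {lo..hi})"
  proof -
    fix x assume "x \<in> {lo..hi}"
    hence x1: "1 < x" using lo1 by simp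
    have "(G has_real_derivative (real n * (1 / (x - 1)))) (at x within {lo..hi})"
      unfolding G_def using x1 by (auto intro!: derivative_eq_intros)
    thus "(G has_vector_derivative (real n / (x - 1))) (at x within {lo..hi})"
      by (simp add: has_real_derivative_iff_has_vector_derivative)
  qed
  have hasg: "((\<lambda>x. real n / (x - 1)) has_integral G hi - G lo) {lo..hi}"
    by (rule fundamental_theorem_of_calculus[OF lh der])
  have Gval: "G hi - G lo = 2 * real n * ln (ln (real n))"
  proof -
    have "G hi - G lo = real n * (ln ((ln (real n))^2 / real n) - ln (1 / real n))"
      unfolding G_def hi_def lo_def by (simp add: algebra_simps)
    also have "ln ((ln (real n))^2 / real n) - ln (1 / real n) = ln ((ln (real n))^2)"
      using ln1 n3 by (simp add: ln_div)
    also have "ln ((ln (real n))^2) = 2 * ln (ln (real n))" using ln1 by (simp add: ln_realpow)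
    finally show ?thesis by simp
  qed
  have "integral {lo..hi} (F_n n) \<le> integral {lo..hi} (\<lambda>x. real n / (x - 1))"
    using intF hasg lo1 by (intro integral_le) (auto intro: F_bound)
  also have "\<dots> = G hi - G lo" using hasg by (rule integral_unique)
  finally show ?thesis using Gval unfolding lo_def hi_def by simp
qed

end
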